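(* Let $a<b$ be real numbers and let $n\ge 1$. There are infinitely many pairwise nonisomorphic nontrivial topological quandle structures on the closed interval $[a,b]$, and there are infinitely many pairwise nonisomorphic nontrivial topological quandle structures on the open unit ball $B^{\circ}=\{x\in\mathbb{R}^n:\|x\|<1\}$.
   Context: A topological quandle is a topological space $X$ with a continuous map $f:X\times X\to X$ such that for every $y\in X$ the map $R_y:X\to X$, $x\mapsto f(x,y)$, is a homeomorphism, $f(f(x,y),z)=f(f(x,z),f(y,z))$ for all $x,y,z\in X$, and $f(x,x)=x$ for all $x\in X$. The structure is trivial if $f(x,y)=x$ for all $x,y$, and nontrivial otherwise. Two topological quandle structures $f_1,f_2$ on spaces $X_1,X_2$ are isomorphic if there is a homeomorphism $\varphi:X_1\to X_2$ with $\varphi(f_1(x,y))=f_2(\varphi(x),\varphi(y))$ for all $x,y\in X_1$. *)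

theory Defs
  imports "HOL-Analysis.Analysis"
begin

definition topological_quandle :: "'a::topological_space set \<Rightarrow> ('a \<Rightarrow> 'a \<Rightarrow> 'a) \<Rightarrow> bool" where
  "topological_quandle X f \<longleftrightarrow>
     (\<forall>x\<in>X. \<forall>y\<in>X. f x y \<in> X) \<and>
     continuous_on (X \<times> X) (\<lambda>(x, y). f x y) \<and>
     (\<forall>y\<in>X. \<exists>g. homeomorphism X X (\<lambda>x. f x y) g) \<and>
     (\<forall>x\<in>X. \<forall>y\<in>X. \<forall>z\<in>X. f (f x y) z = f (f x z) (f y z)) \<and>
     (\<forall>x\<in>X. f x x = x)"

definition nontrivial_quandle :: "'a set \<Rightarrow> ('a \<Rightarrow> 'a \<Rightarrow> 'a) \<Rightarrow> bool" where
  "nontrivial_quandle X f \<longleftrightarrow> (\<exists>x\<in>X. \<exists>y\<in>X. f x y \<noteq> x)"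

definition quandle_isomorphic ::
  "'a::topological_space set \<Rightarrow> ('a \<Rightarrow> 'a \<Rightarrow> 'a) \<Rightarrow> 'b::topological_space set \<Rightarrow> ('b \<Rightarrow> 'b \<Rightarrow> 'b) \<Rightarrow> bool" where
  "quandle_isomorphic X1 f1 X2 f2 \<longleftrightarrow>
     (\<exists>\<phi> \<psi>. homeomorphism X1 X2 \<phi> \<psi> \<and>
        (\<forall>x\<in>X1. \<forall>y\<in>X1. \<phi> (f1 x y) = f2 (\<phi> x) (\<phi> y)))"

end

theory Submission
  imports Defs
begin

definition Lg :: "real \<Rightarrow> real \<Rightarrow> real" where
  "Lg c t = c * exp t / (1 - c + c * exp t)"
definition clampr :: "real \<Rightarrow> real" where "clampr u = max 0 (min 1 u)"
definition dl :: "real \<Rightarrow> real \<Rightarrow> real" where "dl u t = Lg (clampr u) t - clampr u"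
definition hb :: "real \<Rightarrow> real" where "hb v = max 0 (min v (1 - v))"
definition PP :: "nat \<Rightarrow> (nat \<Rightarrow> real) \<Rightarrow> real \<Rightarrow> real" where
  "PP k \<tau> x = x + (\<Sum>i<k. dl (x - 2 * real i) (\<tau> i))"
definition qk :: "nat \<Rightarrow> real \<Rightarrow> real \<Rightarrow> real" where
  "qk k x y = PP k (\<lambda>i. hb (y - 2 * real i - 1)) x"
definition Mr :: "nat \<Rightarrow> real set" where "Mr i = {2 * real i <..< 2 * real i + 1}"
definition Ar :: "nat \<Rightarrow> real set" where "Ar i = {2 * real i + 1 <..< 2 * real i + 2}"

lemma den_pos: fixes c :: real assumes "0 \<le> c" "c \<le> 1" shows "0 < 1 - c + c * exp t"
proof (cases "c < 1")
  case True
  have "0 \<le> c * exp t" using assms by simp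
  then show ?thesis using True by linarith
next
  case False
  then have "c = 1" using assms by simp
  then show ?thesis by simp
qed

lemma Lg_bounds: assumes "0 \<le> c" "c \<le> 1" shows "0 \<le> Lg c t" "Lg c t \<le> 1"
proof -
  have d: "0 < 1 - c + c * exp t" using den_pos assms by blast
  show "0 \<le> Lg c t" unfolding Lg_def using d assms by simp
  show "Lg c t \<le> 1" unfolding Lg_def using d assms by (simp add: divide_le_eq_1)
qed

lemma Lg_strict: assumes "0 < c" "c < 1" shows "0 < Lg c t" "Lg c t < 1"
proof -
  have d: "0 < 1 - c + c * exp t" by (rule den_pos) (use assms in auto)
  show "0 < Lg c t" unfolding Lg_def using d assms by simp
  show "Lg c t < 1" unfolding Lg_def using d assms by (simp add: divide_less_eq_1)
qed

lemma Lg_comp: assumes "0 \<le> c" "c \<le> 1" shows "Lg (Lg c s) t = Lg c (s + t)"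
proof -
  define D where "D = 1 - c + c * exp s"
  have d: "0 < D" unfolding D_def using den_pos assms by blast
  have den0: "1 - c * exp s / D + c * exp s / D * exp t = (D - c * exp s + c * exp s * exp t) / D"
    using d by (simp add: field_simps)
  have "D - c * exp s = 1 - c" by (simp add: D_def)
  then have den: "1 - c * exp s / D + c * exp s / D * exp t = (1 - c + c * exp s * exp t) / D"
    using den0 by simp
  have "Lg (Lg c s) t = (c * exp s / D * exp t) / ((1 - c + c * exp s * exp t) / D)"
    unfolding Lg_def D_def[symmetric] using den by simp
  also have "\<dots> = (c * exp s * exp t) / (1 - c + c * exp s * exp t)"
    using d by (simp add: field_simps)
  finally show ?thesis unfolding Lg_def by (simp add: exp_add mult.assoc)
qed

lemma Lg_0 [simp]: "Lg c 0 = c" "Lg 0 t = 0" "Lg 1 t = 1"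
  unfolding Lg_def by auto

lemma Lg_fix: assumes "0 < c" "c < 1" "Lg c t = c" shows "t = 0"
proof -
  have d: "0 < 1 - c + c * exp t" by (rule den_pos) (use assms in auto)
  have "c * exp t = c * (1 - c + c * exp t)" using assms(3) d unfolding Lg_def
    by (simp add: field_simps)
  then have "exp t = 1 - c + c * exp t" using assms by simp
  then have "(exp t - 1) * (1 - c) = 0" by (simp add: algebra_simps)
  then show ?thesis using assms by simp
qed

lemma dl_out: "u \<le> 0 \<or> 1 \<le> u \<Longrightarrow> dl u t = 0"
  unfolding dl_def clampr_def by auto

lemma dl_in: "0 < u \<Longrightarrow> u < 1 \<Longrightarrow> dl u t = Lg u t - u"
  unfolding dl_def clampr_def by auto

lemma hb_out: "v \<le> 0 \<or> 1 \<le> v \<Longrightarrow> hb v = 0"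
  unfolding hb_def by auto

lemma hb_pos: "0 < v \<Longrightarrow> v < 1 \<Longrightarrow> 0 < hb v"
  unfolding hb_def by auto

lemma sep: fixes i j :: nat assumes "i \<noteq> j" "x \<in> Mr i"
  shows "x - 2 * real j \<le> 0 \<or> 1 \<le> x - 2 * real j"
proof (cases "j < i")
  case True
  then have "real j + 1 \<le> real i" by simp
  then show ?thesis using assms unfolding Mr_def by auto
next
  case False
  then have "real i + 1 \<le> real j" using assms by simp
  then show ?thesis using assms unfolding Mr_def by auto
qed

lemma PP_in: assumes "i < k" "x \<in> Mr i"
  shows "PP k \<tau> x = 2 * real i + Lg (x - 2 * real i) (\<tau> i)"
proof -
  have "(\<Sum>j<k. dl (x - 2 * real j) (\<tau> j)) = dl (x - 2 * real i) (\<tau> i)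
     + (\<Sum>j\<in>{..<k} - {i}. dl (x - 2 * real j) (\<tau> j))"
    using assms by (intro sum.remove) auto
  also have "(\<Sum>j\<in>{..<k} - {i}. dl (x - 2 * real j) (\<tau> j)) = 0"
    by (intro sum.neutral ballI dl_out sep[OF _ assms(2)]) auto
  finally show ?thesis using assms unfolding PP_def Mr_def by (simp add: dl_in)
qed

lemma PP_out: assumes "\<forall>i<k. x \<notin> Mr i" shows "PP k \<tau> x = x"
proof -
  have "(\<Sum>j<k. dl (x - 2 * real j) (\<tau> j)) = 0"
    using assms by (intro sum.neutral ballI dl_out) (auto simp: Mr_def)
  then show ?thesis unfolding PP_def by simp
qed

lemma PP_Mr: assumes "i < k" "x \<in> Mr i" shows "PP k \<tau> x \<in> Mr i"
proof -
  have "0 < x - 2 * real i" "x - 2 * real i < 1" using assms unfolding Mr_def by auto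
  from Lg_strict[OF this, of "\<tau> i"] show ?thesis using PP_in[OF assms] unfolding Mr_def by auto
qed

lemma PP_comp: "PP k \<tau> (PP k \<sigma> x) = PP k (\<lambda>i. \<sigma> i + \<tau> i) x"
proof (cases "\<exists>i<k. x \<in> Mr i")
  case True
  then obtain i where i: "i < k" "x \<in> Mr i" by blast
  have "0 \<le> x - 2 * real i" "x - 2 * real i \<le> 1" using i unfolding Mr_def by auto
  then show ?thesis using PP_in[OF i] PP_in[OF i(1) PP_Mr[OF i]] Lg_comp by simp
next
  case False
  then show ?thesis by (simp add: PP_out)
qed

lemma PP_zero: "PP k (\<lambda>i. 0) x = x"
  unfolding PP_def dl_def by simp

lemma cont_dl: assumes "continuous_on S f" "continuous_on S g"
  shows "continuous_on S (\<lambda>x. dl (f x) (g x))"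
proof -
  have "\<forall>x\<in>S. 1 - max 0 (min 1 (f x)) + max 0 (min 1 (f x)) * exp (g x) \<noteq> 0"
    using den_pos by (metis less_irrefl max.cobounded1 max.bounded_iff min.cobounded1 zero_le_one)
  then show ?thesis unfolding dl_def Lg_def clampr_def
    by (intro continuous_intros assms) auto
qed

lemma hb_Mr: assumes "y \<in> Mr j" shows "hb (y - 2 * real i - 1) = 0"
proof (cases "j \<le> i")
  case True
  then have "real j \<le> real i" by simp
  then show ?thesis using assms by (intro hb_out) (auto simp: Mr_def)
next
  case False
  then have "real i + 1 \<le> real j" by simp
  then show ?thesis using assms by (intro hb_out) (auto simp: Mr_def)
qed

lemma hb_qk: "hb (qk k y z - 2 * real i - 1) = hb (y - 2 * real i - 1)"
proof (cases "\<exists>j<k. y \<in> Mr j")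
  case True
  then obtain j where j: "j < k" "y \<in> Mr j" by blast
  have "qk k y z \<in> Mr j" unfolding qk_def by (rule PP_Mr[OF j])
  then show ?thesis using hb_Mr j by metis
next
  case False
  then show ?thesis by (simp add: qk_def PP_out)
qed

lemma qk_dist: "qk k (qk k x y) z = qk k (qk k x z) (qk k y z)"
  unfolding qk_def[of k "qk k x z"] hb_qk unfolding qk_def PP_comp by (simp add: add.commute)

lemma qk_idem: "qk k x x = x"
proof (cases "\<exists>j<k. x \<in> Mr j")
  case True
  then obtain j where j: "j < k" "x \<in> Mr j" by blast
  have "hb (x - 2 * real j - 1) = 0" using j by (intro hb_out) (auto simp: Mr_def)
  then show ?thesis unfolding qk_def using PP_in[OF j] by simp
next
  case False
  then show ?thesis by (simp add: qk_def PP_out)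
qed

lemma cont_PP: "continuous_on S (PP k \<tau>)"
  unfolding PP_def by (intro continuous_intros cont_dl) 

lemma cont_qk: "continuous_on S (\<lambda>(x, y). qk k x y)"
proof -
  have "continuous_on S (\<lambda>p. fst p + (\<Sum>i<k. dl (fst p - 2 * real i) (hb (snd p - 2 * real i - 1))))"
    unfolding hb_def by (intro continuous_intros cont_dl)
  then show ?thesis unfolding qk_def PP_def by (simp add: case_prod_unfold)
qed

lemma qk_quandle: assumes cl: "\<And>\<tau> x. x \<in> X \<Longrightarrow> PP k \<tau> x \<in> X"
  shows "topological_quandle X (qk k)"
  unfolding topological_quandle_def
proof (intro conjI ballI)
  fix x y assume "x \<in> X" "y \<in> X" then show "qk k x y \<in> X" unfolding qk_def using cl \<open>x \<in> X\<close> by blast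
next
  show "continuous_on (X \<times> X) (\<lambda>(x, y). qk k x y)" by (rule cont_qk)
next
  fix y assume "y \<in> X"
  define \<tau> where "\<tau> = (\<lambda>i. hb (y - 2 * real i - 1))"
  have "homeomorphism X X (PP k \<tau>) (PP k (\<lambda>i. - \<tau> i))"
    unfolding homeomorphism_def
  proof (intro conjI ballI cont_PP)
    have a: "PP k \<tau> (PP k (\<lambda>i. - \<tau> i) x) = x" for x by (simp add: PP_comp PP_zero)
    have b: "PP k (\<lambda>i. - \<tau> i) (PP k \<tau> x) = x" for x by (simp add: PP_comp PP_zero)
    show "PP k \<tau> ` X = X"
    proof
      show "PP k \<tau> ` X \<subseteq> X" using cl by blast
      show "X \<subseteq> PP k \<tau> ` X"
      proof
        fix x assume "x \<in> X"
        then have "PP k (\<lambda>i. - \<tau> i) x \<in> X" by (rule cl)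
        then show "x \<in> PP k \<tau> ` X" using a[of x] by (metis image_eqI)
      qed
    qed
    show "PP k (\<lambda>i. - \<tau> i) ` X = X"
    proof
      show "PP k (\<lambda>i. - \<tau> i) ` X \<subseteq> X" using cl by blast
      show "X \<subseteq> PP k (\<lambda>i. - \<tau> i) ` X"
      proof
        fix x assume "x \<in> X"
        then have "PP k \<tau> x \<in> X" by (rule cl)
        then show "x \<in> PP k (\<lambda>i. - \<tau> i) ` X" using b[of x] by (metis image_eqI)
      qed
    qed
    show "PP k (\<lambda>i. - \<tau> i) (PP k \<tau> x) = x" for x by (rule b)
    show "PP k \<tau> (PP k (\<lambda>i. - \<tau> i) x) = x" for x by (rule a)
  qed
  then show "\<exists>g. homeomorphism X X (\<lambda>x. qk k x y) g" unfolding qk_def \<tau>_def by blast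
qed (rule qk_dist, rule qk_idem)

definition Act :: "'a set \<Rightarrow> ('a \<Rightarrow> 'a \<Rightarrow> 'a) \<Rightarrow> 'a \<Rightarrow> 'a set" where
  "Act X f x = {y\<in>X. f x y \<noteq> x}"
definition ActSets :: "'a set \<Rightarrow> ('a \<Rightarrow> 'a \<Rightarrow> 'a) \<Rightarrow> 'a set set" where
  "ActSets X f = Act X f ` X"

lemma hb_nz_iff: "hb v \<noteq> 0 \<longleftrightarrow> 0 < v \<and> v < 1"
  using hb_out hb_pos by (metis less_irrefl not_le)

lemma act_qk_in: assumes AX: "Ar i \<subseteq> X" and i: "i < k" "x \<in> Mr i"
  shows "Act X (qk k) x = Ar i"
proof -
  have u: "0 < x - 2 * real i" "x - 2 * real i < 1" using i unfolding Mr_def by auto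
  have "qk k x y \<noteq> x \<longleftrightarrow> y \<in> Ar i" for y
  proof -
    have "qk k x y \<noteq> x \<longleftrightarrow> Lg (x - 2 * real i) (hb (y - 2 * real i - 1)) \<noteq> x - 2 * real i"
      unfolding qk_def using PP_in[OF i] by auto
    also have "\<dots> \<longleftrightarrow> hb (y - 2 * real i - 1) \<noteq> 0"
      using Lg_fix[OF u] by auto
    also have "\<dots> \<longleftrightarrow> y \<in> Ar i" unfolding hb_nz_iff Ar_def by auto
    finally show ?thesis .
  qed
  then show ?thesis unfolding Act_def using AX by auto
qed

lemma act_qk_out: assumes "\<forall>i<k. x \<notin> Mr i" shows "Act X (qk k) x = {}"
  unfolding Act_def qk_def using PP_out[OF assms] by auto

lemma ActSets_qk: assumes MX: "\<And>i. i < k \<Longrightarrow> Mr i \<subseteq> X" and AX: "\<And>i. i < k \<Longrightarrow> Ar i \<subseteq> X"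
  and x0: "x0 \<in> X" "\<forall>i<k. x0 \<notin> Mr i"
  shows "ActSets X (qk k) = insert {} (Ar ` {..<k})"
proof
  show "ActSets X (qk k) \<subseteq> insert {} (Ar ` {..<k})"
  proof
    fix S assume "S \<in> ActSets X (qk k)"
    then obtain x where x: "x \<in> X" "S = Act X (qk k) x" unfolding ActSets_def by blast
    show "S \<in> insert {} (Ar ` {..<k})"
    proof (cases "\<exists>i<k. x \<in> Mr i")
      case True
      then obtain i where "i < k" "x \<in> Mr i" by blast
      then show ?thesis using act_qk_in[OF AX] x by auto
    next
      case False then show ?thesis using act_qk_out x by auto
    qed
  qed
  show "insert {} (Ar ` {..<k}) \<subseteq> ActSets X (qk k)"
  proof
    fix S assume "S \<in> insert {} (Ar ` {..<k})"
    then consider "S = {}" | i where "i < k" "S = Ar i" by auto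
    then show "S \<in> ActSets X (qk k)"
    proof cases
      case 1 then show ?thesis using act_qk_out[OF x0(2)] x0(1) unfolding ActSets_def by auto
    next
      case 2
      have "2 * real i + 1/2 \<in> Mr i" unfolding Mr_def by auto
      then have "Act X (qk k) (2 * real i + 1/2) = Ar i" using act_qk_in[OF AX] 2 by blast
      moreover have "2 * real i + 1/2 \<in> X" using MX[OF 2(1)] \<open>2 * real i + 1/2 \<in> Mr i\<close> by blast
      ultimately show ?thesis using 2 unfolding ActSets_def by auto
    qed
  qed
qed

lemma card_Ar: "card (insert {} (Ar ` {..<k})) = Suc k"
proof -
  have inj: "inj_on Ar {..<k}"
  proof (rule inj_onI)
    fix i j assume "Ar i = Ar j"
    then have "2 * real i + 3/2 \<in> Ar j" unfolding Ar_def by auto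
    then have "real i < real j + 1/2" "real j < real i + 1/2" unfolding Ar_def by auto
    then show "i = j" by linarith
  qed
  have "{} \<notin> Ar ` {..<k}"
  proof
    assume "{} \<in> Ar ` {..<k}"
    then obtain i where "Ar i = {}" by auto
    moreover have "2 * real i + 3/2 \<in> Ar i" unfolding Ar_def by auto
    ultimately show False by auto
  qed
  then show ?thesis using card_image[OF inj] by simp
qed

lemma nontrivial_Act: "x \<in> X \<Longrightarrow> Act X f x \<noteq> {} \<Longrightarrow> nontrivial_quandle X f"
  unfolding nontrivial_quandle_def Act_def by auto

lemma iso_card: assumes q: "topological_quandle X1 f1" and iso: "quandle_isomorphic X1 f1 X2 f2"
  shows "card (ActSets X2 f2) = card (ActSets X1 f1)"
proof -
  obtain \<phi> \<psi> where h: "homeomorphism X1 X2 \<phi> \<psi>" and hom: "\<forall>x\<in>X1. \<forall>y\<in>X1. \<phi> (f1 x y) = f2 (\<phi> x) (\<phi> y)"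
    using iso unfolding quandle_isomorphic_def by blast
  have cl: "\<And>x y. x \<in> X1 \<Longrightarrow> y \<in> X1 \<Longrightarrow> f1 x y \<in> X1" using q unfolding topological_quandle_def by blast
  have im: "\<phi> ` X1 = X2" and im2: "\<psi> ` X2 = X1" and inv1: "\<And>x. x \<in> X1 \<Longrightarrow> \<psi> (\<phi> x) = x"
    and inv2: "\<And>y. y \<in> X2 \<Longrightarrow> \<phi> (\<psi> y) = y"
    using h unfolding homeomorphism_def by auto
  have inj: "inj_on \<phi> X1" by (metis inj_onI inv1)
  have A: "Act X2 f2 (\<phi> x) = \<phi> ` Act X1 f1 x" if x: "x \<in> X1" for x
  proof
    show "Act X2 f2 (\<phi> x) \<subseteq> \<phi> ` Act X1 f1 x"
    proof
      fix y' assume y': "y' \<in> Act X2 f2 (\<phi> x)"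
      then have y'X: "y' \<in> X2" and ne: "f2 (\<phi> x) y' \<noteq> \<phi> x" unfolding Act_def by auto
      have yX: "\<psi> y' \<in> X1" using y'X im2 by blast
      have "f2 (\<phi> x) y' = \<phi> (f1 x (\<psi> y'))" using hom x yX inv2[OF y'X] by metis
      then have "f1 x (\<psi> y') \<noteq> x" using ne by auto
      then have "\<psi> y' \<in> Act X1 f1 x" unfolding Act_def using yX by auto
      then show "y' \<in> \<phi> ` Act X1 f1 x" using inv2[OF y'X] by (metis image_eqI)
    qed
    show "\<phi> ` Act X1 f1 x \<subseteq> Act X2 f2 (\<phi> x)"
    proof
      fix y' assume "y' \<in> \<phi> ` Act X1 f1 x"
      then obtain y where y: "y \<in> X1" "f1 x y \<noteq> x" "y' = \<phi> y" unfolding Act_def by auto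
      have "\<phi> (f1 x y) \<noteq> \<phi> x" using inj y x cl[OF x y(1)] by (metis inj_onD)
      then show "y' \<in> Act X2 f2 (\<phi> x)" unfolding Act_def using hom x y im by auto
    qed
  qed
  have "ActSets X2 f2 = Act X2 f2 ` (\<phi> ` X1)" using im by (simp add: ActSets_def)
  also have "\<dots> = (\<lambda>x. Act X2 f2 (\<phi> x)) ` X1" by (rule image_image)
  also have "\<dots> = (\<lambda>x. \<phi> ` Act X1 f1 x) ` X1"
    by (rule image_cong[OF refl]) (rule A)
  also have "\<dots> = image \<phi> ` ActSets X1 f1" by (simp add: ActSets_def image_image)
  finally have "ActSets X2 f2 = image \<phi> ` ActSets X1 f1" .
  moreover have "inj_on (image \<phi>) (ActSets X1 f1)"
    by (rule inj_on_subset[OF inj_on_image_Pow[OF inj]]) (auto simp: ActSets_def Act_def)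
  ultimately show ?thesis by (simp add: card_image)
qed

lemma card_nontrivial: assumes "2 \<le> card (ActSets X f)" shows "nontrivial_quandle X f"
proof (rule ccontr)
  assume "\<not> nontrivial_quandle X f"
  then have "\<forall>x\<in>X. Act X f x = {}" unfolding nontrivial_quandle_def Act_def by auto
  then have "ActSets X f \<subseteq> {{}}" unfolding ActSets_def by auto
  then have "card (ActSets X f) \<le> card {{} :: 'a set}" by (intro card_mono) auto
  then have "card (ActSets X f) \<le> 1" by simp
  then show False using assms by simp
qed

lemma transport:
  assumes h: "homeomorphism X Y \<phi> \<psi>" and q: "topological_quandle X f"
  shows "topological_quandle Y (\<lambda>x y. \<phi> (f (\<psi> x) (\<psi> y)))"
    and "quandle_isomorphic X f Y (\<lambda>x y. \<phi> (f (\<psi> x) (\<psi> y)))"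
proof -
  have cl: "\<And>x y. x \<in> X \<Longrightarrow> y \<in> X \<Longrightarrow> f x y \<in> X"
    and cf: "continuous_on (X \<times> X) (\<lambda>(x, y). f x y)"
    and hy: "\<And>y. y \<in> X \<Longrightarrow> \<exists>g. homeomorphism X X (\<lambda>x. f x y) g"
    and dist: "\<And>x y z. x \<in> X \<Longrightarrow> y \<in> X \<Longrightarrow> z \<in> X \<Longrightarrow> f (f x y) z = f (f x z) (f y z)"
    and idem: "\<And>x. x \<in> X \<Longrightarrow> f x x = x"
    using q unfolding topological_quandle_def by blast+
  have im: "\<phi> ` X = Y" and im2: "\<psi> ` Y = X" and inv1: "\<And>x. x \<in> X \<Longrightarrow> \<psi> (\<phi> x) = x"
    and inv2: "\<And>y. y \<in> Y \<Longrightarrow> \<phi> (\<psi> y) = y"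
    and c1: "continuous_on X \<phi>" and c2: "continuous_on Y \<psi>"
    using h unfolding homeomorphism_def by auto
  have pX: "\<And>y. y \<in> Y \<Longrightarrow> \<psi> y \<in> X" using im2 by blast
  have pY: "\<And>x. x \<in> X \<Longrightarrow> \<phi> x \<in> Y" using im by blast
  show "topological_quandle Y (\<lambda>x y. \<phi> (f (\<psi> x) (\<psi> y)))"
    unfolding topological_quandle_def
  proof (intro conjI ballI)
    fix x y assume "x \<in> Y" "y \<in> Y" then show "\<phi> (f (\<psi> x) (\<psi> y)) \<in> Y" using pX pY cl by blast
  next
    have a: "continuous_on (Y \<times> Y) (\<lambda>p. (\<psi> (fst p), \<psi> (snd p)))"
      by (intro continuous_on_Pair continuous_on_compose2[OF c2] continuous_on_fst continuous_on_snd continuous_on_id) auto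
    have b: "continuous_on (Y \<times> Y) (\<lambda>p. f (\<psi> (fst p)) (\<psi> (snd p)))"
    proof -
      have "(\<lambda>p. (\<psi> (fst p), \<psi> (snd p))) ` (Y \<times> Y) \<subseteq> X \<times> X" using pX by auto
      then show ?thesis using continuous_on_compose2[OF cf a] by (simp add: case_prod_unfold)
    qed
    have "(\<lambda>p. f (\<psi> (fst p)) (\<psi> (snd p))) ` (Y \<times> Y) \<subseteq> X" using pX cl by auto
    then have "continuous_on (Y \<times> Y) (\<lambda>p. \<phi> (f (\<psi> (fst p)) (\<psi> (snd p))))"
      using continuous_on_compose2[OF c1 b] by blast
    then show "continuous_on (Y \<times> Y) (\<lambda>(x, y). \<phi> (f (\<psi> x) (\<psi> y)))" by (simp add: case_prod_unfold)
  next
    fix y assume y: "y \<in> Y"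
    obtain g where g: "homeomorphism X X (\<lambda>x. f x (\<psi> y)) g" using hy[OF pX[OF y]] by blast
    have hs: "homeomorphism Y X \<psi> \<phi>" by (rule homeomorphism_symD[OF h])
    have "homeomorphism Y Y (\<phi> o ((\<lambda>x. f x (\<psi> y)) o \<psi>)) ((\<phi> o g) o \<psi>)"
      by (rule homeomorphism_compose[OF homeomorphism_compose[OF hs g] h])
    then show "\<exists>g. homeomorphism Y Y (\<lambda>x. \<phi> (f (\<psi> x) (\<psi> y))) g" by (auto simp: o_def)
  next
    fix x y z assume xyz: "x \<in> Y" "y \<in> Y" "z \<in> Y"
    show "\<phi> (f (\<psi> (\<phi> (f (\<psi> x) (\<psi> y)))) (\<psi> z)) =
         \<phi> (f (\<psi> (\<phi> (f (\<psi> x) (\<psi> z)))) (\<psi> (\<phi> (f (\<psi> y) (\<psi> z)))))"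
    proof -
      have e1: "\<psi> (\<phi> (f (\<psi> x) (\<psi> y))) = f (\<psi> x) (\<psi> y)" by (rule inv1[OF cl[OF pX[OF xyz(1)] pX[OF xyz(2)]]])
      have e2: "\<psi> (\<phi> (f (\<psi> x) (\<psi> z))) = f (\<psi> x) (\<psi> z)" by (rule inv1[OF cl[OF pX[OF xyz(1)] pX[OF xyz(3)]]])
      have e3: "\<psi> (\<phi> (f (\<psi> y) (\<psi> z))) = f (\<psi> y) (\<psi> z)" by (rule inv1[OF cl[OF pX[OF xyz(2)] pX[OF xyz(3)]]])
      show ?thesis unfolding e1 e2 e3 using dist[OF pX[OF xyz(1)] pX[OF xyz(2)] pX[OF xyz(3)]] by simp
    qed
  next
    fix x assume "x \<in> Y" then show "\<phi> (f (\<psi> x) (\<psi> x)) = x" using idem pX inv2 by simp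
  qed
  show "quandle_isomorphic X f Y (\<lambda>x y. \<phi> (f (\<psi> x) (\<psi> y)))"
    unfolding quandle_isomorphic_def using h inv1 by auto
qed

definition liftq :: "'n \<Rightarrow> (real \<Rightarrow> real \<Rightarrow> real) \<Rightarrow> real ^ 'n \<Rightarrow> real ^ 'n \<Rightarrow> real ^ 'n" where
  "liftq i0 f x y = (\<chi> j. if j = i0 then f (x $ i0) (y $ i0) else x $ j)"

lemma liftq_nth [simp]: "liftq i0 f x y $ j = (if j = i0 then f (x $ i0) (y $ i0) else x $ j)"
  unfolding liftq_def by simp

lemma lift_quandle: fixes i0 :: "'n::finite" assumes q: "topological_quandle UNIV f"
  shows "topological_quandle UNIV (liftq i0 f)"
proof -
  have cf: "continuous_on (UNIV \<times> UNIV) (\<lambda>(x, y). f x y)"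
    and hy: "\<And>y. \<exists>g. homeomorphism UNIV UNIV (\<lambda>x. f x y) g"
    and dist: "\<And>x y z. f (f x y) z = f (f x z) (f y z)"
    and idem: "\<And>x. f x x = x"
    using q unfolding topological_quandle_def by blast+
  show ?thesis unfolding topological_quandle_def
  proof (intro conjI ballI)
    have a: "continuous_on UNIV (\<lambda>p. (fst p $ i0, snd p $ i0))"
      by (intro continuous_intros)
    have b: "continuous_on UNIV (\<lambda>p. f (fst p $ i0) (snd p $ i0))"
      using continuous_on_compose2[OF cf a] by (auto simp: case_prod_unfold)
    have "continuous_on UNIV (\<lambda>p. liftq i0 f (fst p) (snd p))"
      unfolding liftq_def
    proof (intro continuous_on_vec_lambda)
      fix j show "continuous_on UNIV (\<lambda>p. if j = i0 then f (fst p $ i0) (snd p $ i0) else fst p $ j)"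
        using b by (cases "j = i0") (auto intro!: continuous_intros)
    qed
    then show "continuous_on (UNIV \<times> UNIV) (\<lambda>(x, y). liftq i0 f x y)" by (simp add: case_prod_unfold)
  next
    fix y :: "real ^ 'n"
    obtain g where g: "homeomorphism UNIV UNIV (\<lambda>x. f x (y $ i0)) g" using hy by blast
    have gc: "continuous_on UNIV g" and fc: "continuous_on UNIV (\<lambda>x. f x (y $ i0))"
      and i1: "\<And>x. g (f x (y $ i0)) = x" and i2: "\<And>x. f (g x) (y $ i0) = x"
      using g unfolding homeomorphism_def by auto
    define G where "G = (\<lambda>x. \<chi> j. if j = i0 then g (x $ i0) else x $ j)"
    have "homeomorphism UNIV UNIV (\<lambda>x. liftq i0 f x y) G"
      unfolding homeomorphism_def
    proof (intro conjI)
      have A: "G (liftq i0 f x y) = x" for x unfolding G_def by (simp add: vec_eq_iff i1)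
      have B: "liftq i0 f (G x) y = x" for x unfolding G_def by (simp add: vec_eq_iff i2)
      show "(\<lambda>x. liftq i0 f x y) ` UNIV = UNIV" using B by (metis surjI surj_def)
      show "G ` UNIV = UNIV" using A by (metis surjI surj_def)
      show "continuous_on UNIV (\<lambda>x. liftq i0 f x y)" unfolding liftq_def
      proof (intro continuous_on_vec_lambda)
        fix j show "continuous_on UNIV (\<lambda>x. if j = i0 then f (x $ i0) (y $ i0) else x $ j)"
          by (cases "j = i0") (auto intro!: continuous_intros continuous_on_compose2[OF fc])
      qed
      show "continuous_on UNIV G" unfolding G_def
      proof (intro continuous_on_vec_lambda)
        fix j show "continuous_on UNIV (\<lambda>x. if j = i0 then g (x $ i0) else x $ j)"
          by (cases "j = i0") (auto intro!: continuous_intros continuous_on_compose2[OF gc])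
      qed
      show "\<forall>x\<in>UNIV. G (liftq i0 f x y) = x" using A by simp
      show "\<forall>x\<in>UNIV. liftq i0 f (G x) y = x" using B by simp
    qed
    then show "\<exists>g. homeomorphism UNIV UNIV (\<lambda>x. liftq i0 f x y) g" by blast
  qed (auto simp: vec_eq_iff idem intro: dist)
qed

lemma lift_card: fixes i0 :: "'n::finite" shows "card (ActSets UNIV (liftq i0 f)) = card (ActSets UNIV f)"
proof -
  define p where "p = (\<lambda>x. x $ i0 :: real)"
  have A: "Act UNIV (liftq i0 f) x = p -` Act UNIV f (p x)" for x
    unfolding Act_def p_def by (auto simp: vec_eq_iff)
  have sp: "p ` UNIV = UNIV"
  proof -
    have "p (\<chi> j. r) = r" for r unfolding p_def by simp
    then show ?thesis by (intro surjI[of p "\<lambda>r. \<chi> j. r"])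
  qed
  have "ActSets UNIV (liftq i0 f) = (\<lambda>x. p -` Act UNIV f (p x)) ` UNIV"
    unfolding ActSets_def by (rule image_cong[OF refl]) (rule A)
  also have "\<dots> = vimage p ` (Act UNIV f ` (p ` UNIV))" by (simp only: image_image)
  also have "\<dots> = vimage p ` ActSets UNIV f" unfolding ActSets_def sp ..
  finally have "ActSets UNIV (liftq i0 f) = vimage p ` ActSets UNIV f" .
  moreover have "inj_on (vimage p) (ActSets UNIV f)"
  proof (rule inj_onI)
    fix S T assume "p -` S = p -` T"
    then show "S = T" using surj_image_vimage_eq[OF sp, of S] surj_image_vimage_eq[OF sp, of T] by simp
  qed
  ultimately show ?thesis by (simp add: card_image)
qed

lemma interval_family: fixes a b :: real assumes "a < b" "1 \<le> k"
  shows "\<exists>f. topological_quandle {a..b} f \<and> card (ActSets {a..b} f) = Suc k"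
proof -
  define X where "X = {0..2 * real k}"
  have "X homeomorphic {a..b}" unfolding X_def
    by (rule homeomorphic_closed_intervals_real) (use assms in auto)
  then obtain \<phi> \<psi> where h: "homeomorphism X {a..b} \<phi> \<psi>" unfolding homeomorphic_def by blast
  have MX: "Mr i \<subseteq> X" if "i < k" for i
  proof -
    have "real i + 1 \<le> real k" using that by simp
    then show ?thesis unfolding Mr_def X_def by auto
  qed
  have AX: "Ar i \<subseteq> X" if "i < k" for i
  proof -
    have "real i + 1 \<le> real k" using that by simp
    then show ?thesis unfolding Ar_def X_def by auto
  qed
  have cl: "PP k \<tau> x \<in> X" if "x \<in> X" for \<tau> x
  proof (cases "\<exists>i<k. x \<in> Mr i")
    case True
    then obtain i where "i < k" "x \<in> Mr i" by blast
    then show ?thesis using PP_Mr MX by blast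
  next
    case False then show ?thesis using that by (simp add: PP_out)
  qed
  have q: "topological_quandle X (qk k)" by (rule qk_quandle) (rule cl)
  have "ActSets X (qk k) = insert {} (Ar ` {..<k})"
  proof (rule ActSets_qk[of k X 0])
    show "Mr i \<subseteq> X" if "i < k" for i using MX that .
    show "Ar i \<subseteq> X" if "i < k" for i using AX that .
  qed (auto simp: X_def Mr_def)
  then have c: "card (ActSets X (qk k)) = Suc k" using card_Ar by simp
  show ?thesis using transport[OF h q] iso_card[OF q] c by metis
qed

lemma ball_family: assumes "1 \<le> k"
  shows "\<exists>G :: real ^ ('n::finite) \<Rightarrow> real ^ 'n \<Rightarrow> real ^ 'n.
     topological_quandle (ball 0 1) G \<and> card (ActSets (ball 0 1) G) = Suc k"
proof -
  have qU: "topological_quandle UNIV (qk k)" by (rule qk_quandle) simp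
  have "ActSets UNIV (qk k) = insert {} (Ar ` {..<k})"
    by (rule ActSets_qk[of k UNIV 0]) (auto simp: Mr_def)
  then have cU: "card (ActSets UNIV (qk k)) = Suc k" using card_Ar by simp
  define i0 :: 'n where "i0 = undefined"
  have qL: "topological_quandle UNIV (liftq i0 (qk k))" by (rule lift_quandle[OF qU])
  have cL: "card (ActSets UNIV (liftq i0 (qk k))) = Suc k" using lift_card cU by metis
  have "ball (0 :: real ^ 'n) 1 homeomorphic (UNIV :: (real ^ 'n) set)"
    by (rule homeomorphic_ball_UNIV) simp
  then have "(UNIV :: (real ^ 'n) set) homeomorphic ball (0 :: real ^ 'n) 1"
    by (rule homeomorphic_sym[THEN iffD1])
  then obtain \<phi> \<psi> where h: "homeomorphism (UNIV :: (real ^ 'n) set) (ball (0 :: real ^ 'n) 1) \<phi> \<psi>"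
    unfolding homeomorphic_def by blast
  show ?thesis using transport[OF h qL] iso_card[OF qL] cL by metis
qed

theorem mainTheorem2:
  fixes a b :: real
  assumes "a < b"
  shows "(\<exists>F :: nat \<Rightarrow> (real \<Rightarrow> real \<Rightarrow> real).
            (\<forall>i. topological_quandle {a..b} (F i) \<and> nontrivial_quandle {a..b} (F i)) \<and>
            (\<forall>i j. i \<noteq> j \<longrightarrow> \<not> quandle_isomorphic {a..b} (F i) {a..b} (F j)))
       \<and> (\<exists>G :: nat \<Rightarrow> (real ^ 'n \<Rightarrow> real ^ 'n \<Rightarrow> real ^ 'n).
            (\<forall>i. topological_quandle (ball 0 1) (G i) \<and> nontrivial_quandle (ball 0 1) (G i)) \<and>
            (\<forall>i j. i \<noteq> j \<longrightarrow> \<not> quandle_isomorphic (ball 0 1) (G i) (ball 0 1) (G j)))"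
proof
  have "\<forall>i. \<exists>f. topological_quandle {a..b} f \<and> card (ActSets {a..b} f) = Suc (Suc i)"
    using interval_family[OF assms] by simp
  then obtain F where F: "\<And>i. topological_quandle {a..b} (F i) \<and> card (ActSets {a..b} (F i)) = Suc (Suc i)"
    by metis
  show "\<exists>F :: nat \<Rightarrow> (real \<Rightarrow> real \<Rightarrow> real).
            (\<forall>i. topological_quandle {a..b} (F i) \<and> nontrivial_quandle {a..b} (F i)) \<and>
            (\<forall>i j. i \<noteq> j \<longrightarrow> \<not> quandle_isomorphic {a..b} (F i) {a..b} (F j))"
  proof (intro exI[of _ F] conjI allI impI notI)
    fix i show "topological_quandle {a..b} (F i)" using F by blast
    show "nontrivial_quandle {a..b} (F i)" using F[of i] by (intro card_nontrivial) simp
  next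
    fix i j assume "i \<noteq> j" "quandle_isomorphic {a..b} (F i) {a..b} (F j)"
    then show False using iso_card F by (metis Suc_inject)
  qed
next
  have "\<forall>i. \<exists>f :: real ^ 'n \<Rightarrow> real ^ 'n \<Rightarrow> real ^ 'n.
     topological_quandle (ball 0 1) f \<and> card (ActSets (ball 0 1) f) = Suc (Suc i)"
    by (intro allI ball_family) simp
  then obtain G :: "nat \<Rightarrow> real ^ 'n \<Rightarrow> real ^ 'n \<Rightarrow> real ^ 'n"
    where G: "\<And>i. topological_quandle (ball 0 1) (G i) \<and> card (ActSets (ball 0 1) (G i)) = Suc (Suc i)"
    by metis
  show "\<exists>G :: nat \<Rightarrow> (real ^ 'n \<Rightarrow> real ^ 'n \<Rightarrow> real ^ 'n).
            (\<forall>i. topological_quandle (ball 0 1) (G i) \<and> nontrivial_quandle (ball 0 1) (G i)) \<and>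
            (\<forall>i j. i \<noteq> j \<longrightarrow> \<not> quandle_isomorphic (ball 0 1) (G i) (ball 0 1) (G j))"
  proof (intro exI[of _ G] conjI allI impI notI)
    fix i show "topological_quandle (ball 0 1) (G i)" using G by blast
    show "nontrivial_quandle (ball 0 1) (G i)" using G[of i] by (intro card_nontrivial) simp
  next
    fix i j assume "i \<noteq> j" "quandle_isomorphic (ball 0 1) (G i) (ball 0 1) (G j)"
    then show False using iso_card G by (metis Suc_inject)
  qed
qed

end
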